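(* Let $X$ be a compact metric space and let $f\colon X\to X$ be a homeomorphism. If there exists a Borel probability measure on $X$ which is inner-distal with respect to $f$, then there exists an $f$-invariant Borel probability measure on $X$ which is inner-distal with respect to $f$.
   Context: For a homeomorphism $f\colon X\to X$ of a metric space $(X,d)$, the proximal cell of $x$ is $\mathcal{P}(x)=\{y\in X\colon \inf_{n\in\mathbb{Z}} d(f^n(x),f^n(y))=0\}$. A Borel probability measure $\mu$ is inner-distal with respect to $f$ if $\mu(\operatorname{Int}\mathcal{P}(x))=0$ for every $x\in X$. It is $f$-invariant if $\mu(f^{-1}(A))=\mu(A)$ for every Borel set $A$. *)

theory Defs
  imports "HOL-Probability.Probability"
begin

definition ziter :: "'a set \<Rightarrow> ('a \<Rightarrow> 'a) \<Rightarrow> int \<Rightarrow> 'a \<Rightarrow> 'a" where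
  "ziter X f n = (if 0 \<le> n then f ^^ nat n else (inv_into X f) ^^ nat (- n))"

definition proximal_cell :: "'a::metric_space set \<Rightarrow> ('a \<Rightarrow> 'a) \<Rightarrow> 'a \<Rightarrow> 'a set" where
  "proximal_cell X f x = {y \<in> X. (INF n::int. dist (ziter X f n x) (ziter X f n y)) = 0}"

definition borel_prob_on :: "'a::topological_space set \<Rightarrow> 'a measure \<Rightarrow> bool" where
  "borel_prob_on X M \<longleftrightarrow> prob_space M \<and> sets M = sets (restrict_space borel X)"

definition inner_distal :: "'a::metric_space set \<Rightarrow> ('a \<Rightarrow> 'a) \<Rightarrow> 'a measure \<Rightarrow> bool" where
  "inner_distal X f M \<longleftrightarrow>
     (\<forall>x\<in>X. emeasure M ((top_of_set X) interior_of (proximal_cell X f x)) = 0)"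

definition f_invariant :: "'a set \<Rightarrow> ('a \<Rightarrow> 'a) \<Rightarrow> 'a measure \<Rightarrow> bool" where
  "f_invariant X f M \<longleftrightarrow> (\<forall>A\<in>sets M. emeasure M (f -` A \<inter> X) = emeasure M A)"

end

theory Submission
  imports Defs
begin

locale kb =
  fixes X :: "'a::metric_space set" and f g :: "'a \<Rightarrow> 'a" and lam :: "'a set \<Rightarrow> real"
  assumes cX: "compact X" and hom: "homeomorphism X X f g"
  and lam_nn: "\<And>A. 0 \<le> lam A"
  and lam_add: "\<And>A B. A \<inter> B = {} \<Longrightarrow> lam (A \<union> B) = lam A + lam B"
  and lam_UNIV: "lam UNIV = 1"
  and lam_X: "\<And>A. lam (A \<inter> X) = lam A"
  and lam_inv: "\<And>A. lam (f -` A) = lam A"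
begin

lemma lam_mono: "A \<subseteq> B \<Longrightarrow> lam A \<le> lam B"
proof -
  assume "A \<subseteq> B"
  then have "B = A \<union> (B - A)" by auto
  then have "lam B = lam A + lam (B - A)" using lam_add[of A "B - A"] by auto
  then show ?thesis using lam_nn[of "B - A"] by linarith
qed

lemma lam_empty: "lam {} = 0"
  using lam_add[of "{}" "{}"] by simp

lemma lam_sub: "lam (A \<union> B) \<le> lam A + lam B"
proof -
  have "A \<union> B = A \<union> (B - A)" by auto
  then have "lam (A \<union> B) = lam A + lam (B - A)" using lam_add[of A "B - A"] by auto
  moreover have "lam (B - A) \<le> lam B" by (rule lam_mono) auto
  ultimately show ?thesis by linarith
qed

lemma lam_le1: "lam A \<le> 1"
  using lam_mono[of A UNIV] lam_UNIV by simp

definition rho :: "'a set \<Rightarrow> real" where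
  "rho C = Inf (lam ` {W. open W \<and> C \<subseteq> W})"

lemma rho_le: "open W \<Longrightarrow> C \<subseteq> W \<Longrightarrow> rho C \<le> lam W"
  unfolding rho_def
  by (rule cInf_lower) (auto intro: bdd_belowI[where m=0] simp: lam_nn)

lemma rho_ge: "(\<And>W. open W \<Longrightarrow> C \<subseteq> W \<Longrightarrow> c \<le> lam W) \<Longrightarrow> c \<le> rho C"
  unfolding rho_def
  by (rule cInf_greatest) auto

lemma rho_nn: "0 \<le> rho C"
  by (rule rho_ge) (simp add: lam_nn)

lemma rho_approx:
  assumes "e > 0" shows "\<exists>W. open W \<and> C \<subseteq> W \<and> lam W < rho C + e"
proof (rule ccontr)
  assume "\<not> ?thesis"
  then have "rho C + e \<le> rho C" by (intro rho_ge) (auto simp: not_less)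
  then show False using assms by simp
qed

lemma rho_mono: "C \<subseteq> D \<Longrightarrow> rho C \<le> rho D"
  by (rule rho_ge) (auto intro: rho_le)

lemma rho_empty: "rho {} = 0"
  using rho_le[of "{}" "{}"] rho_nn[of "{}"] lam_empty by simp

lemma rho_sub: "rho (C \<union> D) \<le> rho C + rho D"
proof (rule field_le_epsilon)
  fix e :: real assume "e > 0"
  then obtain U V where U: "open U" "C \<subseteq> U" "lam U < rho C + e/2"
    and V: "open V" "D \<subseteq> V" "lam V < rho D + e/2"
    using rho_approx[of "e/2"] by (meson half_gt_zero)
  have "rho (C \<union> D) \<le> lam (U \<union> V)" using U V by (intro rho_le) auto
  also have "\<dots> \<le> lam U + lam V" by (rule lam_sub)
  finally show "rho (C \<union> D) \<le> rho C + rho D + e" using U V by linarith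
qed

lemma rho_add:
  assumes "compact C" "compact D" "C \<inter> D = {}"
  shows "rho C + rho D \<le> rho (C \<union> D)"
proof (rule rho_ge)
  fix W assume W: "open W" "C \<union> D \<subseteq> W"
  obtain U V where UV: "open U" "open V" "C \<subseteq> U" "D \<subseteq> V" "U \<inter> V = {}"
    using t4_space[of C D] assms compact_imp_closed by metis
  have "rho C \<le> lam (W \<inter> U)" using UV W by (intro rho_le) auto
  moreover have "rho D \<le> lam (W \<inter> V)" using UV W by (intro rho_le) auto
  moreover have "lam (W \<inter> U) + lam (W \<inter> V) = lam ((W \<inter> U) \<union> (W \<inter> V))"
    using UV by (intro lam_add[symmetric]) auto
  moreover have "lam ((W \<inter> U) \<union> (W \<inter> V)) \<le> lam W" by (rule lam_mono) auto
  ultimately show "rho C + rho D \<le> lam W" by linarith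
qed

definition rhoo :: "'a set \<Rightarrow> real" where
  "rhoo W = Sup (rho ` {C. compact C \<and> C \<subseteq> W \<inter> X})"

lemma rho_le1: "rho C \<le> 1"
  using rho_le[of UNIV C] lam_UNIV by simp

lemma rhoo_ge: "compact C \<Longrightarrow> C \<subseteq> W \<inter> X \<Longrightarrow> rho C \<le> rhoo W"
  unfolding rhoo_def
  by (rule cSup_upper) (auto intro: bdd_aboveI[where M=1] simp: rho_le1)

lemma rhoo_le: "(\<And>C. compact C \<Longrightarrow> C \<subseteq> W \<inter> X \<Longrightarrow> rho C \<le> c) \<Longrightarrow> rhoo W \<le> c"
  unfolding rhoo_def
  by (rule cSup_least) auto

lemma rhoo_nn: "0 \<le> rhoo W"
  using rhoo_ge[of "{}" W] rho_empty by simp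

lemma rhoo_mono: "W \<subseteq> W' \<Longrightarrow> rhoo W \<le> rhoo W'"
  by (rule rhoo_le) (auto intro: rhoo_ge)

lemma rhoo_lam: "open W \<Longrightarrow> rhoo W \<le> lam W"
  by (rule rhoo_le) (auto intro: rho_le)

lemma rhoo_approx:
  assumes "e > 0" shows "\<exists>C. compact C \<and> C \<subseteq> W \<inter> X \<and> rhoo W - e < rho C"
proof (rule ccontr)
  assume "\<not> ?thesis"
  then have "rhoo W \<le> rhoo W - e" by (intro rhoo_le) (auto simp: not_less)
  then show False using assms by simp
qed

lemma split_compact:
  fixes C :: "'a set"
  assumes "compact C" "open U" "open V" "C \<subseteq> U \<union> V"
  shows "\<exists>C1 C2. compact C1 \<and> compact C2 \<and> C1 \<subseteq> U \<and> C2 \<subseteq> V \<and> C = C1 \<union> C2"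
proof -
  have cl: "closed (C - U)" by (rule closed_Diff[OF compact_imp_closed[OF assms(1)] assms(2)])
  have "closed (- V)" using assms by auto
  moreover have "(C - U) \<inter> (- V) = {}" using assms by auto
  ultimately obtain W W' where W: "open W" "open W'" "C - U \<subseteq> W" "- V \<subseteq> W'" "W \<inter> W' = {}"
    using t4_space[OF cl] by metis
  have "compact (C \<inter> (- W))" using assms W by (intro compact_Int_closed) auto
  moreover have "compact (C \<inter> (- W'))" using assms W by (intro compact_Int_closed) auto
  moreover have "C \<inter> (- W) \<subseteq> U" using W by auto
  moreover have "C \<inter> (- W') \<subseteq> V" using W by auto
  moreover have "C = (C \<inter> (- W)) \<union> (C \<inter> (- W'))" using W by auto
  ultimately show ?thesis by blast
qed

lemma rhoo_sub2: "open U \<Longrightarrow> open V \<Longrightarrow> rhoo (U \<union> V) \<le> rhoo U + rhoo V"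
proof (rule rhoo_le)
  fix C assume UV: "open U" "open V" and C: "compact C" "C \<subseteq> (U \<union> V) \<inter> X"
  then obtain C1 C2 where S: "compact C1" "compact C2" "C1 \<subseteq> U" "C2 \<subseteq> V" "C = C1 \<union> C2"
    using split_compact[of C U V] by auto
  have "rho C \<le> rho C1 + rho C2" using S rho_sub by simp
  also have "\<dots> \<le> rhoo U + rhoo V" using S C by (intro add_mono rhoo_ge) auto
  finally show "rho C \<le> rhoo U + rhoo V" .
qed

lemma fin_cover:
  fixes N :: nat
  assumes "\<And>i. open (W i)"
  shows "compact C \<Longrightarrow> C \<subseteq> X \<Longrightarrow> C \<subseteq> (\<Union>i<N. W i) \<Longrightarrow> rho C \<le> (\<Sum>i<N. rhoo (W i))"
proof (induction N arbitrary: C)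
  case 0
  then show ?case using rho_empty by simp
next
  case (Suc N)
  have "C \<subseteq> (\<Union>i<N. W i) \<union> W N" using Suc.prems by (auto simp: lessThan_Suc)
  moreover have "open (\<Union>i<N. W i)" using assms by (intro open_UN) auto
  ultimately obtain C1 C2 where S: "compact C1" "compact C2" "C1 \<subseteq> (\<Union>i<N. W i)" "C2 \<subseteq> W N" "C = C1 \<union> C2"
    using split_compact[OF Suc.prems(1) _ assms[of N]] by metis
  have "rho C \<le> rho C1 + rho C2" using S rho_sub by simp
  also have "\<dots> \<le> (\<Sum>i<N. rhoo (W i)) + rhoo (W N)"
    using S Suc.prems by (intro add_mono Suc.IH rhoo_ge) auto
  finally show ?case by simp
qed

definition musr :: "'a set \<Rightarrow> real" where
  "musr A = Inf (rhoo ` {W. open W \<and> A \<subseteq> W})"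

lemma musr_le: "open W \<Longrightarrow> A \<subseteq> W \<Longrightarrow> musr A \<le> rhoo W"
  unfolding musr_def
  by (rule cInf_lower) (auto intro: bdd_belowI[where m=0] simp: rhoo_nn)

lemma musr_ge: "(\<And>W. open W \<Longrightarrow> A \<subseteq> W \<Longrightarrow> c \<le> rhoo W) \<Longrightarrow> c \<le> musr A"
  unfolding musr_def
  by (rule cInf_greatest) auto

lemma musr_nn: "0 \<le> musr A"
  by (rule musr_ge) (simp add: rhoo_nn)

lemma musr_approx:
  assumes "e > 0" shows "\<exists>W. open W \<and> A \<subseteq> W \<and> rhoo W < musr A + e"
proof (rule ccontr)
  assume "\<not> ?thesis"
  then have "musr A + e \<le> musr A" by (intro musr_ge) (auto simp: not_less)
  then show False using assms by simp
qed

lemma musr_mono: "A \<subseteq> B \<Longrightarrow> musr A \<le> musr B"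
  by (rule musr_ge) (auto intro: musr_le)

lemma musr_empty: "musr {} = 0"
  using musr_le[of "{}" "{}"] rhoo_lam[of "{}"] lam_empty musr_nn[of "{}"] by simp

lemma musr_open_le: "open W \<Longrightarrow> musr W \<le> lam W"
  using musr_le[of W W] rhoo_lam[of W] by simp

lemma musr_compact:
  assumes "compact C" "C \<subseteq> X" shows "musr C = rho C"
proof (rule antisym)
  show "musr C \<le> rho C"
    by (rule rho_ge) (meson musr_le rhoo_lam order_trans)
  show "rho C \<le> musr C"
    by (rule musr_ge) (use assms in \<open>auto intro: rhoo_ge\<close>)
qed

lemma musr_sub2: "musr (A \<union> B) \<le> musr A + musr B"
proof (rule field_le_epsilon)
  fix e :: real assume "e > 0"
  then obtain U V where U: "open U" "A \<subseteq> U" "rhoo U < musr A + e/2"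
    and V: "open V" "B \<subseteq> V" "rhoo V < musr B + e/2"
    using musr_approx[of "e/2"] by (meson half_gt_zero)
  have "musr (A \<union> B) \<le> rhoo (U \<union> V)" using U V by (intro musr_le) auto
  also have "\<dots> \<le> rhoo U + rhoo V" using U V by (intro rhoo_sub2)
  finally show "musr (A \<union> B) \<le> musr A + musr B + e" using U V by linarith
qed

lemma musr_csub:
  assumes sm: "summable (\<lambda>i. musr (A i))"
  shows "musr (\<Union>i. A i) \<le> (\<Sum>i. musr (A i))"
proof (rule field_le_epsilon)
  fix e :: real assume e: "e > 0"
  define d where "d i = e * (1/2)^Suc i" for i :: nat
  have d: "d i > 0" for i using e by (simp add: d_def)
  have dsum: "d sums e" unfolding d_def using sums_mult[OF power_half_series, of e] by simp
  have "\<forall>i. \<exists>W. open W \<and> A i \<subseteq> W \<and> rhoo W < musr (A i) + d i"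
    using musr_approx[OF d] by blast
  from choice[OF this] obtain W where W': "\<forall>i. open (W i) \<and> A i \<subseteq> W i \<and> rhoo (W i) < musr (A i) + d i"
    by blast
  then have W: "\<And>i. open (W i)" "\<And>i. A i \<subseteq> W i" "\<And>i. rhoo (W i) < musr (A i) + d i"
    by auto
  have sm2: "summable (\<lambda>i. musr (A i) + d i)"
    using sm dsum by (intro summable_add) (auto simp: sums_iff)
  have sm3: "summable (\<lambda>i. rhoo (W i))"
  proof (rule summable_comparison_test[OF _ sm2])
    have "\<forall>n. norm (rhoo (W n)) \<le> musr (A n) + d n"
      using W(3) rhoo_nn by (metis less_imp_le real_norm_def abs_of_nonneg)
    then show "\<exists>N. \<forall>n\<ge>N. norm (rhoo (W n)) \<le> musr (A n) + d n" by blast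
  qed
  have "musr (\<Union>i. A i) \<le> rhoo (\<Union>i. W i)" using W by (intro musr_le) auto
  also have "\<dots> \<le> (\<Sum>i. rhoo (W i))"
  proof (rule rhoo_le)
    fix C assume C: "compact C" "C \<subseteq> (\<Union>i. W i) \<inter> X"
    have cov: "C \<subseteq> \<Union>(W ` UNIV)" using C by auto
    obtain I where I: "I \<subseteq> UNIV" "finite I" "C \<subseteq> (\<Union>i\<in>I. W i)"
      by (rule compactE_image[OF C(1) _ cov]) (use W(1) in blast)+
    obtain N where "I \<subseteq> {..<N}"
      using I(2) finite_nat_iff_bounded by blast
    then have CN: "C \<subseteq> (\<Union>i<N. W i)" using I(3) by blast
    have CX: "C \<subseteq> X" using C by auto
    have "rho C \<le> (\<Sum>i<N. rhoo (W i))" by (rule fin_cover[OF W(1) C(1) CX CN])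
    also have "\<dots> \<le> (\<Sum>i. rhoo (W i))"
      by (rule sum_le_suminf[OF sm3]) (auto simp: rhoo_nn)
    finally show "rho C \<le> (\<Sum>i. rhoo (W i))" .
  qed
  also have "\<dots> \<le> (\<Sum>i. musr (A i) + d i)"
    using sm3 sm2 W by (intro suminf_le) (auto intro: less_imp_le)
  also have "\<dots> = (\<Sum>i. musr (A i)) + e"
    using sm dsum by (simp add: suminf_add[symmetric] sums_iff)
  finally show "musr (\<Union>i. A i) \<le> (\<Sum>i. musr (A i)) + e" .
qed

lemma musr_split:
  assumes C: "compact C" "C \<subseteq> X" and that: "A \<subseteq> X"
  shows "musr (C \<inter> A) + musr ((X - C) \<inter> A) = musr A"
proof (rule antisym)
  have "A = (C \<inter> A) \<union> ((X - C) \<inter> A)" using that by auto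
  then show "musr A \<le> musr (C \<inter> A) + musr ((X - C) \<inter> A)"
    using musr_sub2[of "C \<inter> A" "(X - C) \<inter> A"] by simp
next
  show "musr (C \<inter> A) + musr ((X - C) \<inter> A) \<le> musr A"
  proof (rule musr_ge)
    fix W assume W: "open W" "A \<subseteq> W"
    show "musr (C \<inter> A) + musr ((X - C) \<inter> A) \<le> rhoo W"
    proof (rule field_le_epsilon)
      fix e :: real assume e: "e > 0"
      have oWC: "open (W - C)" using C W by (simp add: open_Diff compact_imp_closed)
      obtain D where D: "compact D" "D \<subseteq> (W - C) \<inter> X" "rhoo (W - C) - e/2 < rho D"
        using rhoo_approx[of "e/2" "W - C"] e by auto
      have oWD: "open (W - D)" using D W by (simp add: open_Diff compact_imp_closed)
      obtain E where E: "compact E" "E \<subseteq> (W - D) \<inter> X" "rhoo (W - D) - e/2 < rho E"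
        using rhoo_approx[of "e/2" "W - D"] e by auto
      have "rho D + rho E \<le> rho (D \<union> E)" using D E by (intro rho_add) auto
      also have "\<dots> \<le> rhoo W" using D E by (intro rhoo_ge compact_Un) auto
      finally have 1: "rho D + rho E \<le> rhoo W" .
      have 2: "musr ((X - C) \<inter> A) \<le> rhoo (W - C)" using W oWC by (intro musr_le) auto
      have 3: "musr (C \<inter> A) \<le> rhoo (W - D)" using W oWD D by (intro musr_le) auto
      show "musr (C \<inter> A) + musr ((X - C) \<inter> A) \<le> rhoo W + e"
        using 1 2 3 D E by linarith
    qed
  qed
qed

lemma hom_facts:
  shows "\<And>x. x \<in> X \<Longrightarrow> g (f x) = x" "\<And>y. y \<in> X \<Longrightarrow> f (g y) = y"
    "\<And>x. x \<in> X \<Longrightarrow> f x \<in> X" "\<And>x. x \<in> X \<Longrightarrow> g x \<in> X"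
    "continuous_on X f" "continuous_on X g"
  using hom unfolding homeomorphism_def by auto

lemma preimage_eq: "C \<subseteq> X \<Longrightarrow> f -` C \<inter> X = g ` C"
  using hom_facts by (auto simp: image_iff) (metis subsetD)+

lemma lam_inv2: "lam (f -` A \<inter> X) = lam A"
  using lam_X[of "f -` A"] lam_inv[of A] by simp

lemma rho_inv:
  assumes C: "compact C" "C \<subseteq> X" shows "rho (g ` C) = rho C"
proof (rule antisym)
  show "rho (g ` C) \<le> rho C"
  proof (rule rho_ge)
    fix V assume V: "open V" "C \<subseteq> V"
    have "openin (top_of_set X) (X \<inter> f -` V)"
      by (rule continuous_openin_preimage_gen[OF hom_facts(5) V(1)])
    then obtain O' where O': "open O'" "X \<inter> f -` V = X \<inter> O'" by (auto simp: openin_open)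
    have "g ` C \<subseteq> O'"
    proof
      fix y assume "y \<in> g ` C"
      then obtain c where c: "c \<in> C" "y = g c" by auto
      then have "y \<in> X" "f y \<in> V" using C V hom_facts by (auto simp: subset_iff)
      then show "y \<in> O'" using O' by auto
    qed
    then have "rho (g ` C) \<le> lam O'" using O' by (intro rho_le) auto
    also have "\<dots> = lam (O' \<inter> X)" using lam_X by simp
    also have "O' \<inter> X = f -` V \<inter> X" using O' by auto
    also have "lam \<dots> = lam V" by (rule lam_inv2)
    finally show "rho (g ` C) \<le> lam V" .
  qed
next
  show "rho C \<le> rho (g ` C)"
  proof (rule rho_ge)
    fix W assume W: "open W" "g ` C \<subseteq> W"
    have "openin (top_of_set X) (X \<inter> g -` W)"
      by (rule continuous_openin_preimage_gen[OF hom_facts(6) W(1)])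
    then obtain O' where O': "open O'" "X \<inter> g -` W = X \<inter> O'" by (auto simp: openin_open)
    have "C \<subseteq> O'" using C W O' by auto
    then have "rho C \<le> lam O'" using O' by (intro rho_le) auto
    also have "\<dots> = lam (O' \<inter> X)" using lam_X by simp
    also have "O' \<inter> X = X \<inter> g -` W" using O' by auto
    also have "lam \<dots> = lam (f -` (X \<inter> g -` W) \<inter> X)" by (rule lam_inv2[symmetric])
    also have "f -` (X \<inter> g -` W) \<inter> X = W \<inter> X" using hom_facts by auto
    also have "lam \<dots> = lam W" by (rule lam_X)
    finally show "rho C \<le> lam W" .
  qed
qed

definition mus :: "'a set \<Rightarrow> ennreal" where "mus A = ennreal (musr A)"

lemma oms: "outer_measure_space (Pow X) mus"
  unfolding outer_measure_space_def
proof safe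
  show "positive (Pow X) mus" by (simp add: positive_def mus_def musr_empty)
  show "increasing (Pow X) mus"
    by (auto simp: increasing_def mus_def intro!: ennreal_leI musr_mono)
  show "countably_subadditive (Pow X) mus"
    unfolding countably_subadditive_def
  proof safe
    fix A :: "nat \<Rightarrow> 'a set"
    show "mus (\<Union>i. A i) \<le> (\<Sum>i. mus (A i))"
    proof (cases "summable (\<lambda>i. musr (A i))")
      case True
      then show ?thesis unfolding mus_def
        by (simp add: suminf_ennreal2 musr_nn musr_csub ennreal_leI)
    next
      case False
      then show ?thesis unfolding mus_def
        by (simp add: summable_iff_suminf_neq_top musr_nn)
    qed
  qed
qed

definition E :: "'a set set" where "E = {C. compact C \<and> C \<subseteq> X}"

lemma E_lambda: "E \<subseteq> lambda_system X (Pow X) mus"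
  unfolding lambda_system_def E_def
proof safe
  fix C x assume C: "compact C" "C \<subseteq> X" and x: "x \<subseteq> X"
  show "mus (C \<inter> x) + mus ((X - C) \<inter> x) = mus x"
    unfolding mus_def using musr_split[OF C x]
    by (simp add: ennreal_plus[symmetric] musr_nn)
qed

lemma E_Pow: "E \<subseteq> Pow X" by (auto simp: E_def)

lemma sa_S: "sigma_algebra X (sigma_sets X E)"
  by (rule sigma_algebra_sigma_sets[OF E_Pow])

lemma ms_S: "measure_space X (sigma_sets X E) mus"
proof -
  have ms: "measure_space X (lambda_system X (Pow X) mus) mus"
    by (rule sigma_algebra.caratheodory_lemma[OF sigma_algebra_Pow oms])
  then have "sigma_algebra X (lambda_system X (Pow X) mus)" by (simp add: measure_space_def)
  then have "sigma_sets X E \<subseteq> lambda_system X (Pow X) mus"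
    by (rule sigma_algebra.sigma_sets_subset[OF _ E_lambda])
  then show ?thesis by (rule measure_down[OF ms sa_S])
qed

definition mu :: "'a measure" where "mu = measure_of X (sigma_sets X E) mus"

lemma sets_mu: "sets mu = sigma_sets X E"
  unfolding mu_def by (rule sigma_algebra.sets_measure_of_eq[OF sa_S])

lemma space_mu: "space mu = X"
  unfolding mu_def by (rule sigma_algebra.space_measure_of_eq[OF sa_S])

lemma emeasure_mu: "A \<in> sigma_sets X E \<Longrightarrow> emeasure mu A = mus A"
  unfolding mu_def using ms_S
  by (intro emeasure_measure_of_sigma[OF sa_S]) (auto simp: measure_space_def)

lemma S_borel: "sigma_sets X E = sets (restrict_space borel X)"
proof -
  have XS: "X \<in> sigma_sets UNIV (Collect closed)"
    using cX compact_imp_closed by (auto intro: sigma_sets.Basic)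
  have "sets (restrict_space borel X) = (\<inter>) X ` sigma_sets UNIV (Collect closed)"
    by (simp add: sets_restrict_space borel_eq_closed)
  also have "\<dots> = sigma_sets X ((\<inter>) X ` Collect closed)"
    by (rule sigma_sets_Int[OF XS]) simp
  also have "(\<inter>) X ` Collect closed = E"
  proof safe
    fix S :: "'a set" assume "closed S"
    then show "X \<inter> S \<in> E" using cX by (auto simp: E_def intro: compact_Int_closed)
  next
    fix C assume "C \<in> E"
    then have "closed C" "C = X \<inter> C" by (auto simp: E_def compact_imp_closed)
    then show "C \<in> (\<inter>) X ` Collect closed" by blast
  qed
  finally show ?thesis by simp
qed

lemma mu_compact: "compact C \<Longrightarrow> C \<subseteq> X \<Longrightarrow> emeasure mu C = ennreal (rho C)"
  by (subst emeasure_mu) (auto simp: E_def mus_def musr_compact intro: sigma_sets.Basic)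

lemma mu_prob: "prob_space mu"
proof (rule prob_spaceI)
  have "rho X = 1"
  proof (rule antisym)
    show "rho X \<le> 1" by (rule rho_le1)
    show "1 \<le> rho X"
    proof (rule rho_ge)
      fix W assume "open W" "X \<subseteq> W"
      then have "lam W = lam X" using lam_X[of W] by (simp add: Int_absorb1)
      also have "lam X = 1" using lam_X[of UNIV] lam_UNIV by simp
      finally show "1 \<le> lam W" by simp
    qed
  qed
  then show "emeasure mu (space mu) = 1" using mu_compact[OF cX] space_mu by simp
qed

lemma mu_invariant: "A \<in> sets mu \<Longrightarrow> emeasure mu (f -` A \<inter> X) = emeasure mu A"
proof -
  assume A: "A \<in> sets mu"
  have meas: "f \<in> mu \<rightarrow>\<^sub>M mu"
  proof -
    have "f \<in> restrict_space borel X \<rightarrow>\<^sub>M restrict_space borel X"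
      by (rule measurable_restrict_space2)
        (use hom_facts in \<open>auto intro: borel_measurable_continuous_on_restrict simp: space_restrict_space\<close>)
    moreover have "sets mu = sets (restrict_space borel X)" using sets_mu S_borel by simp
    ultimately show ?thesis by (simp add: measurable_cong_sets[of mu "restrict_space borel X" mu "restrict_space borel X"])
  qed
  have eq: "distr mu mu f = mu"
  proof (rule measure_eqI_generator_eq[where E=E and \<Omega>=X and A="\<lambda>_. X"])
    show "Int_stable E" by (auto simp: Int_stable_def E_def intro: compact_Int)
    show "E \<subseteq> Pow X" by (rule E_Pow)
    show "sets (distr mu mu f) = sigma_sets X E" using sets_mu by simp
    show "sets mu = sigma_sets X E" by (rule sets_mu)
    show "range (\<lambda>_. X) \<subseteq> E" using cX by (auto simp: E_def)
    show "(\<Union>i::nat. X) = X" by simp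
    show "emeasure (distr mu mu f) X \<noteq> \<infinity>" for i :: nat
      using prob_space.finite_measure[OF prob_space.prob_space_distr[OF mu_prob meas]]
      by (simp add: finite_measure.emeasure_finite)
    fix C assume C: "C \<in> E"
    then have C': "compact C" "C \<subseteq> X" by (auto simp: E_def)
    have "C \<in> sets mu" using C sets_mu by (auto intro: sigma_sets.Basic)
    then have "emeasure (distr mu mu f) C = emeasure mu (f -` C \<inter> X)"
      using meas by (simp add: emeasure_distr space_mu)
    also have "\<dots> = emeasure mu (g ` C)" using preimage_eq C' by simp
    also have "\<dots> = ennreal (rho (g ` C))"
      using C' hom_facts by (intro mu_compact compact_continuous_image) (auto intro: continuous_on_subset)
    also have "\<dots> = emeasure mu C" using rho_inv C' mu_compact by simp
    finally show "emeasure (distr mu mu f) C = emeasure mu C" .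
  qed
  have "emeasure mu (f -` A \<inter> X) = emeasure (distr mu mu f) A"
    using meas A by (simp add: emeasure_distr space_mu)
  then show ?thesis using eq by simp
qed

lemma mu_null: "open W \<Longrightarrow> lam W = 0 \<Longrightarrow> emeasure mu (X \<inter> W) = 0"
proof -
  assume W: "open W" "lam W = 0"
  have "X \<inter> W \<in> sigma_sets X E" using W S_borel
    by (simp add: sets_restrict_space)
  then have "emeasure mu (X \<inter> W) = ennreal (musr (X \<inter> W))" by (simp add: emeasure_mu mus_def)
  moreover have "musr (X \<inter> W) \<le> 0"
    using musr_le[of W "X \<inter> W"] rhoo_lam[of W] W by auto
  ultimately show ?thesis using musr_nn[of "X \<inter> W"] by simp
qed

end

definition isU :: "nat set set \<Rightarrow> bool" where
  "isU U \<longleftrightarrow> (\<forall>N. {N..} \<in> U) \<and> {} \<notin> U \<and> (\<forall>S T. S \<in> U \<longrightarrow> T \<in> U \<longrightarrow> S \<inter> T \<in> U)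
     \<and> (\<forall>S T. S \<in> U \<longrightarrow> S \<subseteq> T \<longrightarrow> T \<in> U)"

lemma isU_D:
  assumes "isU U"
  shows "{N..} \<in> U" "{} \<notin> U" "S \<in> U \<Longrightarrow> T \<in> U \<Longrightarrow> S \<inter> T \<in> U"
    "S \<in> U \<Longrightarrow> S \<subseteq> T \<Longrightarrow> T \<in> U"
  using assms unfolding isU_def by blast+

lemma exists_ultra: "\<exists>U. isU U \<and> (\<forall>S. S \<in> U \<or> - S \<in> U)"
proof -
  let ?A = "{U. isU U}"
  have "\<forall>C\<in>chains ?A. \<exists>U\<in>?A. \<forall>X\<in>C. X \<subseteq> U"
  proof
    fix C assume C: "C \<in> chains ?A"
    show "\<exists>U\<in>?A. \<forall>X\<in>C. X \<subseteq> U"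
    proof (cases "C = {}")
      case True
      let ?U0 = "{S::nat set. \<exists>N. {N..} \<subseteq> S}"
      have "isU ?U0" unfolding isU_def
      proof (intro conjI allI impI)
        show "{} \<notin> ?U0"
        proof
          assume "{} \<in> ?U0"
          then obtain N :: nat where "{N..} \<subseteq> {}" by blast
          moreover have "N \<in> {N..}" by simp
          ultimately show False by blast
        qed
      next
        fix S T assume "S \<in> ?U0" "T \<in> ?U0"
        then obtain N M where "{N..} \<subseteq> S" "{M..} \<subseteq> T" by auto
        then have "{max N M..} \<subseteq> S \<inter> T" by auto
        then show "S \<inter> T \<in> ?U0" by blast
      next
        fix N show "{N..} \<in> ?U0" by blast
      next
        fix S T assume "S \<in> ?U0" "S \<subseteq> T"
        then obtain N where "{N..} \<subseteq> S" by blast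
        then have "{N..} \<subseteq> T" using \<open>S \<subseteq> T\<close> by (rule order_trans)
        then show "T \<in> ?U0" by blast
      qed
      then have "?U0 \<in> ?A" by simp
      then show ?thesis using True by blast
    next
      case False
      have ch: "\<And>U V. U \<in> C \<Longrightarrow> V \<in> C \<Longrightarrow> U \<subseteq> V \<or> V \<subseteq> U"
        using C by (auto simp: chains_def chain_subset_def)
      have iC: "\<And>U. U \<in> C \<Longrightarrow> isU U" using C by (auto simp: chains_def)
      have "isU (\<Union>C)" unfolding isU_def
      proof (intro conjI allI impI)
        fix N
        obtain U where "U \<in> C" using False by blast
        then show "{N..} \<in> \<Union>C" using iC isU_D(1) by blast
      next
        show "{} \<notin> \<Union>C"
        proof
          assume "{} \<in> \<Union>C"
          then obtain U where "U \<in> C" "{} \<in> U" by blast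
          then show False using iC isU_D(2) by blast
        qed
      next
        fix S T assume "S \<in> \<Union>C" "T \<in> \<Union>C"
        then obtain U V where UV: "U \<in> C" "V \<in> C" "S \<in> U" "T \<in> V" by auto
        show "S \<inter> T \<in> \<Union>C"
        proof (cases "U \<subseteq> V")
          case True
          then have "S \<inter> T \<in> V" using UV iC[OF UV(2)] isU_D(3) by blast
          then show ?thesis using UV by blast
        next
          case False
          then have "V \<subseteq> U" using ch[OF UV(1,2)] by blast
          then have "S \<inter> T \<in> U" using UV iC[OF UV(1)] isU_D(3) by blast
          then show ?thesis using UV by blast
        qed
      next
        fix S T assume "S \<in> \<Union>C" "S \<subseteq> T"
        then obtain U where "U \<in> C" "S \<in> U" by blast
        then have "T \<in> U" using iC isU_D(4) \<open>S \<subseteq> T\<close> by blast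
        then show "T \<in> \<Union>C" using \<open>U \<in> C\<close> by blast
      qed
      then show ?thesis by blast
    qed
  qed
  from Zorn_Lemma2[OF this] obtain M where M: "isU M" "\<And>X. isU X \<Longrightarrow> M \<subseteq> X \<Longrightarrow> X = M"
    by blast
  have "S \<in> M \<or> - S \<in> M" for S
  proof (rule ccontr)
    assume neg: "\<not> (S \<in> M \<or> - S \<in> M)"
    let ?M' = "{T. \<exists>A\<in>M. A \<inter> S \<subseteq> T}"
    have Mp: "(\<forall>N. {N..} \<in> M)" "{} \<notin> M" "\<And>S T. S \<in> M \<Longrightarrow> T \<in> M \<Longrightarrow> S \<inter> T \<in> M"
      "\<And>S T. S \<in> M \<Longrightarrow> S \<subseteq> T \<Longrightarrow> T \<in> M"
      using isU_D[OF M(1)] by blast+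
    have "isU ?M'" unfolding isU_def
    proof (intro conjI allI impI)
      fix N show "{N..} \<in> ?M'" using Mp(1) by blast
    next
      show "{} \<notin> ?M'"
      proof
        assume "{} \<in> ?M'"
        then obtain A where "A \<in> M" "A \<inter> S \<subseteq> {}" by blast
        then have "A \<subseteq> - S" by auto
        then show False using neg Mp(4) \<open>A \<in> M\<close> by blast
      qed
    next
      fix T1 T2 assume "T1 \<in> ?M'" "T2 \<in> ?M'"
      then obtain A B where "A \<in> M" "B \<in> M" "A \<inter> S \<subseteq> T1" "B \<inter> S \<subseteq> T2" by blast
      then have "A \<inter> B \<in> M" "(A \<inter> B) \<inter> S \<subseteq> T1 \<inter> T2" using Mp(3) by auto
      then show "T1 \<inter> T2 \<in> ?M'" by blast
    next
      fix T1 T2 assume "T1 \<in> ?M'" "T1 \<subseteq> T2"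
      then show "T2 \<in> ?M'" by blast
    qed
    moreover have "M \<subseteq> ?M'" by blast
    ultimately have "?M' = M" using M(2) by blast
    moreover have "S \<in> ?M'" using Mp(1) by blast
    ultimately show False using neg by blast
  qed
  then show ?thesis using M(1) by blast
qed

lemma exists_ultrafilter:
  "\<exists>F::nat filter. F \<noteq> bot \<and> F \<le> sequentially \<and> (\<forall>P. eventually P F \<or> eventually (\<lambda>n. \<not> P n) F)"
proof -
  obtain M where M: "isU M" "\<And>S. S \<in> M \<or> - S \<in> M" using exists_ultra by blast
  have Mp: "(\<forall>N. {N..} \<in> M)" "{} \<notin> M" "\<And>S T. S \<in> M \<Longrightarrow> T \<in> M \<Longrightarrow> S \<inter> T \<in> M"
    "\<And>S T. S \<in> M \<Longrightarrow> S \<subseteq> T \<Longrightarrow> T \<in> M"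
    using isU_D[OF M(1)] by blast+
  have isf: "is_filter (\<lambda>P. {n. P n} \<in> M)"
  proof
    show "{n. True} \<in> M" using Mp(1)[rule_format, of 0] by simp
  next
    fix P Q assume "{n. P n} \<in> M" "{n. Q n} \<in> M"
    then have "{n. P n} \<inter> {n. Q n} \<in> M" by (rule Mp(3))
    then show "{n. P n \<and> Q n} \<in> M" by (simp add: Collect_conj_eq)
  next
    fix P Q assume "\<forall>x. P x \<longrightarrow> Q x" "{n. P n} \<in> M"
    then show "{n. Q n} \<in> M" using Mp(4) by blast
  qed
  define F where "F = Abs_filter (\<lambda>P. {n. P n} \<in> M)"
  have ev: "eventually P F \<longleftrightarrow> {n. P n} \<in> M" for P
    unfolding F_def by (rule eventually_Abs_filter[OF isf])
  have "F \<noteq> bot"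
  proof
    assume "F = bot"
    then have "eventually (\<lambda>_. False) F" by simp
    then show False using ev Mp(2) by simp
  qed
  moreover have "F \<le> sequentially"
    unfolding le_filter_def eventually_sequentially
  proof safe
    fix P :: "nat \<Rightarrow> bool" and N assume "\<forall>n\<ge>N. P n"
    then have "{N..} \<subseteq> {n. P n}" by auto
    then show "eventually P F" using ev Mp(1,4) by blast
  qed
  moreover have "eventually P F \<or> eventually (\<lambda>n. \<not> P n) F" for P
    using M(2)[of "{n. P n}"] ev by (simp add: Collect_neg_eq)
  ultimately show ?thesis by blast
qed

lemma ultra_lim:
  fixes F :: "nat filter" and a :: "nat \<Rightarrow> real"
  assumes F: "F \<noteq> bot" "\<forall>P. eventually P F \<or> eventually (\<lambda>n. \<not> P n) F"
    and a: "\<And>n. a n \<in> {0..1}"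
  shows "\<exists>L. (a \<longlongrightarrow> L) F"
proof -
  have "filtermap a F \<noteq> bot" using F by (simp add: filtermap_bot_iff)
  moreover have "eventually (\<lambda>x. x \<in> {0..1}) (filtermap a F)"
    using a by (simp add: eventually_filtermap)
  ultimately obtain L where L: "inf (nhds L) (filtermap a F) \<noteq> bot"
    using compact_filter[THEN iffD1, OF compact_Icc, rule_format] by blast
  have "(a \<longlongrightarrow> L) F"
    unfolding tendsto_def
  proof safe
    fix S assume S: "open S" "L \<in> S"
    show "eventually (\<lambda>n. a n \<in> S) F"
    proof (rule ccontr)
      assume "\<not> eventually (\<lambda>n. a n \<in> S) F"
      then have "eventually (\<lambda>n. a n \<notin> S) F" using F(2) by blast
      then have 1: "eventually (\<lambda>x. x \<notin> S) (filtermap a F)" by (simp add: eventually_filtermap)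
      have 2: "eventually (\<lambda>x. x \<in> S) (nhds L)" using S by (rule eventually_nhds_in_open)
      have "eventually (\<lambda>_. False) (inf (nhds L) (filtermap a F))"
        unfolding eventually_inf using 1 2 by blast
      then show False using L by simp
    qed
  qed
  then show ?thesis by blast
qed


lemma ziter_g:
  assumes hom: "homeomorphism X X f g" and z: "z \<in> X"
  shows "ziter X f n (g z) = ziter X f (n - 1) z"
proof -
  have inj: "inj_on f X" using hom by (metis homeomorphism_def inj_on_inverseI)
  have hg: "inv_into X f y = g y" if "y \<in> X" for y
    using hom that by (intro inv_into_f_eq[OF inj]) (auto simp: homeomorphism_def)
  let ?h = "inv_into X f"
  show ?thesis
  proof (cases "n \<ge> 1")
    case True
    then have "nat n = Suc (nat (n - 1))" by simp
    then have "(f ^^ nat n) (g z) = (f ^^ nat (n - 1)) (f (g z))"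
      by (simp only: funpow_Suc_right o_apply)
    also have "f (g z) = z" using hom z by (simp add: homeomorphism_def)
    finally show ?thesis using True by (simp add: ziter_def)
  next
    case False
    then have n0: "n \<le> 0" by simp
    have "ziter X f n (g z) = (?h ^^ nat (- n)) (g z)"
      using n0 by (cases "n = 0") (auto simp: ziter_def)
    also have "g z = ?h z" using hg z by simp
    also have "(?h ^^ nat (- n)) (?h z) = (?h ^^ Suc (nat (- n))) z"
      by (simp only: funpow_Suc_right o_apply)
    also have "Suc (nat (- n)) = nat (- (n - 1))" using n0 by simp
    also have "(?h ^^ nat (- (n - 1))) z = ziter X f (n - 1) z"
      using n0 by (simp add: ziter_def)
    finally show ?thesis using hg z by simp
  qed
qed

lemma prox_g:
  assumes hom: "homeomorphism X X f g" and x: "x \<in> X" and y: "y \<in> proximal_cell X f x"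
  shows "g y \<in> proximal_cell X f (g x)"
proof -
  have yX: "y \<in> X" using y by (simp add: proximal_cell_def)
  let ?a = "\<lambda>n. dist (ziter X f n x) (ziter X f n y)"
  have surj1: "range (\<lambda>n::int. n - 1) = UNIV"
    by (rule surjI[where f="\<lambda>n. n + 1"]) simp
  have img: "range (\<lambda>n::int. ?a (n - 1)) = range ?a"
  proof -
    have "?a ` range (\<lambda>n::int. n - 1) = range (\<lambda>n::int. ?a (n - 1))" by (rule image_image)
    then show ?thesis using surj1 by simp
  qed
  have "(INF n. dist (ziter X f n (g x)) (ziter X f n (g y))) = Inf (range (\<lambda>n::int. ?a (n - 1)))"
    using ziter_g[OF hom x] ziter_g[OF hom yX] by simp
  also have "\<dots> = Inf (range ?a)" by (simp only: img)
  also have "\<dots> = 0" using y by (simp add: proximal_cell_def)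
  finally have "(INF n. dist (ziter X f n (g x)) (ziter X f n (g y))) = 0" .
  moreover have "g y \<in> X" using hom yX by (auto simp: homeomorphism_def)
  ultimately show ?thesis by (simp add: proximal_cell_def)
qed

lemma int_g:
  assumes hom: "homeomorphism X X f g" and x: "x \<in> X" and z: "z \<in> X"
    and fz: "f z \<in> (top_of_set X) interior_of (proximal_cell X f x)"
  shows "z \<in> (top_of_set X) interior_of (proximal_cell X f (g x))"
proof -
  obtain U where U: "openin (top_of_set X) U" "f z \<in> U" "U \<subseteq> proximal_cell X f x"
    using fz by (auto simp: interior_of_def)
  have hom2: "homeomorphism X X g f" using hom by (rule homeomorphism_symD)
  have gfz: "g (f z) = z" using z hom by (simp add: homeomorphism_def)
  have "openin (top_of_set X) (g ` U)" by (rule homeomorphism_imp_open_map[OF hom2 U(1)])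
  moreover have "z \<in> g ` U" using U(2) gfz by (metis image_eqI)
  moreover have "g ` U \<subseteq> proximal_cell X f (g x)" using U prox_g[OF hom x] by blast
  ultimately show ?thesis by (auto simp: interior_of_def)
qed


theorem theorem2p14:
  fixes X :: "'a::metric_space set" and f :: "'a \<Rightarrow> 'a"
  assumes "compact X"
    and "\<exists>g. homeomorphism X X f g"
    and "\<exists>M. borel_prob_on X M \<and> inner_distal X f M"
  shows "\<exists>\<mu>. borel_prob_on X \<mu> \<and> f_invariant X f \<mu> \<and> inner_distal X f \<mu>"
proof -
  obtain g where hom: "homeomorphism X X f g" using assms(2) by blast
  obtain M where M: "borel_prob_on X M" "inner_distal X f M" using assms(3) by blast
  let ?I = "\<lambda>x. (top_of_set X) interior_of (proximal_cell X f x)"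
  have psM: "prob_space M" and setsM: "sets M = sets (restrict_space borel X)"
    using M(1) by (auto simp: borel_prob_on_def)
  have spM: "space M = X"
    using sets_eq_imp_space_eq[OF setsM] by (simp add: space_restrict_space)
  have Iopen: "\<exists>T. open T \<and> ?I x = X \<inter> T" for x
    using openin_interior_of[of "top_of_set X" "proximal_cell X f x"] openin_open by metis
  then obtain T where T: "\<And>x. open (T x)" "\<And>x. ?I x = X \<inter> T x" by metis
  have Isets: "?I x \<in> sets M" for x
    unfolding setsM sets_restrict_space T(2) using T(1)[of x] by auto
  have Inull: "emeasure M (?I x) = 0" if "x \<in> X" for x
    using M(2) that by (simp add: inner_distal_def)
  have hf: "\<And>x. x \<in> X \<Longrightarrow> f x \<in> X" "\<And>x. x \<in> X \<Longrightarrow> g x \<in> X"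
    using hom by (auto simp: homeomorphism_def)
  have "\<exists>x0\<in>X. \<forall>x\<in>X. x0 \<notin> ?I x"
  proof (rule ccontr)
    assume "\<not> ?thesis"
    then have cov: "\<forall>y\<in>X. \<exists>x\<in>X. y \<in> X \<inter> T x" using T(2) by blast
    then have cov2: "X \<subseteq> \<Union>(T ` X)" by blast
    obtain J where J: "J \<subseteq> X" "finite J" "X \<subseteq> \<Union>(T ` J)"
      by (rule compactE_image[OF assms(1) _ cov2]) (use T(1) in blast)+
    have "X \<subseteq> (\<Union>x\<in>J. ?I x)" using J T(2) by blast
    moreover have null: "(\<Union>x\<in>J. ?I x) \<in> null_sets M"
    proof (rule null_sets_UN')
      show "countable J" using J(2) by (rule countable_finite)
      fix x assume "x \<in> J"
      then show "?I x \<in> null_sets M" using Isets Inull J(1) by (auto intro: null_setsI)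
    qed
    ultimately have "emeasure M X \<le> emeasure M (\<Union>x\<in>J. ?I x)"
      by (intro emeasure_mono) auto
    also have "\<dots> = 0" using null by auto
    finally have "emeasure M (space M) = 0" using spM by simp
    then show False using prob_space.emeasure_space_1[OF psM] by simp
  qed
  then obtain x0 where x0: "x0 \<in> X" "\<And>x. x \<in> X \<Longrightarrow> x0 \<notin> ?I x" by blast
  have orb: "(f ^^ k) x0 \<in> X \<and> (\<forall>x\<in>X. (f ^^ k) x0 \<notin> ?I x)" for k
  proof (induction k)
    case 0
    then show ?case using x0 by simp
  next
    case (Suc k)
    let ?z = "(f ^^ k) x0"
    have zX: "?z \<in> X" using Suc.IH by blast
    have "\<forall>x\<in>X. f ?z \<notin> ?I x"
    proof (intro ballI notI)
      fix x assume x: "x \<in> X" and fz: "f ?z \<in> ?I x"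
      have "?z \<in> ?I (g x)" by (rule int_g[OF hom x zX fz])
      then show False using Suc.IH hf(2)[OF x] by blast
    qed
    then show ?case using hf(1)[OF zX] by simp
  qed
  obtain F :: "nat filter" where F: "F \<noteq> bot" "F \<le> sequentially"
    "\<forall>P. eventually P F \<or> eventually (\<lambda>n. \<not> P n) F"
    using exists_ultrafilter by blast
  define nu where "nu A n = (\<Sum>k<n. indicator A ((f ^^ k) x0)) / real n" for A n
  have nu01: "nu A n \<in> {0..1}" for A n
  proof -
    have "(\<Sum>k<n. indicator A ((f ^^ k) x0) :: real) \<le> (\<Sum>k<n. 1)"
      by (intro sum_mono) (auto simp: indicator_def)
    moreover have "0 \<le> (\<Sum>k<n. indicator A ((f ^^ k) x0) :: real)"
      by (intro sum_nonneg) auto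
    ultimately show ?thesis unfolding nu_def
      by (cases "n = 0") (auto simp: divide_le_eq_1)
  qed
  define lam where "lam A = Lim F (nu A)" for A
  have lamt: "(nu A \<longlongrightarrow> lam A) F" for A
  proof -
    obtain L where L: "(nu A \<longlongrightarrow> L) F" using ultra_lim[OF F(1) F(3), of "nu A"] nu01 by blast
    then have "lam A = L" unfolding lam_def by (rule tendsto_Lim[OF F(1)])
    then show ?thesis using L by simp
  qed
  have lam_inv: "lam (f -` A) = lam A" for A
  proof -
    define b where "b k = (indicator A ((f ^^ k) x0) :: real)" for k
    have b01: "b k \<in> {0..1}" for k by (auto simp: b_def indicator_def)
    have diff: "nu (f -` A) n - nu A n = (b n - b 0) / real n" for n
    proof -
      have "(\<Sum>k<n. indicator (f -` A) ((f ^^ k) x0) :: real) = (\<Sum>k<n. b (Suc k))"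
        by (simp add: b_def indicator_vimage)
      then have "nu (f -` A) n - nu A n = ((\<Sum>k<n. b (Suc k)) - (\<Sum>k<n. b k)) / real n"
        unfolding nu_def b_def by (simp add: diff_divide_distrib)
      also have "(\<Sum>k<n. b (Suc k)) - (\<Sum>k<n. b k) = (\<Sum>k<n. b (Suc k) - b k)"
        by (simp add: sum_subtractf)
      also have "\<dots> = b n - b 0" by (rule sum_lessThan_telescope)
      finally show ?thesis .
    qed
    have "((\<lambda>n. nu (f -` A) n - nu A n) \<longlongrightarrow> 0) sequentially"
    proof (rule tendsto_sandwich[where f="\<lambda>n. -1 / real n" and h="\<lambda>n. 1 / real n"])
      have "-1 / real n \<le> (b n - b 0) / real n \<and> (b n - b 0) / real n \<le> 1 / real n" for n
      proof -
        have h: "-1 \<le> b n - b 0" "b n - b 0 \<le> 1" using b01[of n] b01[of 0] by auto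
        show ?thesis
          using divide_right_mono[OF h(1), of "real n"] divide_right_mono[OF h(2), of "real n"] by simp
      qed
      then show "eventually (\<lambda>n. -1 / real n \<le> nu (f -` A) n - nu A n) sequentially"
        "eventually (\<lambda>n. nu (f -` A) n - nu A n \<le> 1 / real n) sequentially"
        using diff by auto
      show "((\<lambda>n. -1 / real n) \<longlongrightarrow> 0) sequentially" by (rule lim_const_over_n)
      show "((\<lambda>n. 1 / real n) \<longlongrightarrow> 0) sequentially" by (rule lim_const_over_n)
    qed
    then have "((\<lambda>n. nu (f -` A) n - nu A n) \<longlongrightarrow> 0) F" by (rule tendsto_mono[OF F(2)])
    moreover have "((\<lambda>n. nu (f -` A) n - nu A n) \<longlongrightarrow> lam (f -` A) - lam A) F"
      by (intro tendsto_diff lamt)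
    ultimately have "lam (f -` A) - lam A = 0" using tendsto_unique[OF F(1)] by blast
    then show ?thesis by simp
  qed
  have lam_add: "lam (A \<union> B) = lam A + lam B" if "A \<inter> B = {}" for A B
  proof -
    have "nu (A \<union> B) = (\<lambda>n. nu A n + nu B n)"
      using that by (auto simp: nu_def indicator_disj_union sum.distrib add_divide_distrib)
    then have "(nu (A \<union> B) \<longlongrightarrow> lam A + lam B) F" by (simp add: tendsto_add lamt)
    then show ?thesis using tendsto_unique[OF F(1) lamt] by blast
  qed
  have lam_nn: "0 \<le> lam A" for A
    by (rule tendsto_lowerbound[OF lamt _ F(1)]) (use nu01 in auto)
  have lam_UNIV: "lam UNIV = 1"
  proof -
    have "eventually (\<lambda>n. nu UNIV n = 1) sequentially"
      unfolding eventually_sequentially by (intro exI[of _ 1]) (auto simp: nu_def)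
    then have "eventually (\<lambda>n. nu UNIV n = 1) F" by (rule filter_leD[OF F(2)])
    then have "(nu UNIV \<longlongrightarrow> 1) F" by (rule tendsto_eventually)
    then show ?thesis using tendsto_unique[OF F(1) lamt] by blast
  qed
  have lam_X: "lam (A \<inter> X) = lam A" for A
  proof -
    have "nu (A \<inter> X) = nu A"
      using orb by (auto simp: nu_def indicator_def intro!: ext sum.cong)
    then show ?thesis by (simp add: lam_def)
  qed
  have lamI: "lam (?I x) = 0" if "x \<in> X" for x
  proof -
    have "nu (?I x) = (\<lambda>n. 0)"
      using orb that by (auto simp: nu_def indicator_def intro!: ext sum.neutral)
    then have "(nu (?I x) \<longlongrightarrow> 0) F" by simp
    then show ?thesis using tendsto_unique[OF F(1) lamt] by blast
  qed
  interpret K: kb X f g lam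
    by unfold_locales (use assms(1) hom lam_nn lam_add lam_UNIV lam_X lam_inv in auto)
  have "borel_prob_on X K.mu"
    unfolding borel_prob_on_def using K.mu_prob K.sets_mu K.S_borel by simp
  moreover have "f_invariant X f K.mu"
    unfolding f_invariant_def using K.mu_invariant by blast
  moreover have "inner_distal X f K.mu"
    unfolding inner_distal_def
  proof
    fix x assume x: "x \<in> X"
    have "lam (T x) = lam (T x \<inter> X)" by (rule lam_X[symmetric])
    also have "T x \<inter> X = ?I x" using T(2)[of x] by auto
    also have "lam \<dots> = 0" by (rule lamI[OF x])
    finally have "emeasure K.mu (X \<inter> T x) = 0" by (intro K.mu_null T(1))
    then show "emeasure K.mu (?I x) = 0" using T(2)[of x] by simp
  qed
  ultimately show ?thesis by blast
qed

end
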